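(* Let $0<q<1$. The kernel $K(\mu,n)=1/(q^{\mu};q)_n$ is strictly sign regular of order $3$ on $(0,\infty)\times\mathbb{N}_0$ with sign pattern $(+,-,-)$, i.e. for all reals $0<\mu_1<\mu_2<\mu_3$ and integers $0\le n_1<n_2<n_3$: $K(\mu_1,n_1)>0$, $\det\big(K(\mu_i,n_j)\big)_{i,j=1}^2<0$, and $\det\big(K(\mu_i,n_j)\big)_{i,j=1}^3<0$ (for all choices of indices of the respective sizes).
   Context: $(a;q)_n=\prod_{j=0}^{n-1}(1-aq^j)$, with $(a;q)_0=1$. *)

theory Defs
  imports Complex_Main
begin

definition qpoch :: "real \<Rightarrow> real \<Rightarrow> nat \<Rightarrow> real" where
  "qpoch a q n = (\<Prod>j<n. (1 - a * q ^ j))"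

definition K :: "real \<Rightarrow> real \<Rightarrow> nat \<Rightarrow> real" where
  "K q \<mu> n = 1 / qpoch (q powr \<mu>) q n"

definition det2 :: "real \<Rightarrow> real \<Rightarrow> real \<Rightarrow> nat \<Rightarrow> nat \<Rightarrow> real" where
  "det2 q m1 m2 n1 n2 = K q m1 n1 * K q m2 n2 - K q m1 n2 * K q m2 n1"

definition det3 :: "real \<Rightarrow> real \<Rightarrow> real \<Rightarrow> real \<Rightarrow> nat \<Rightarrow> nat \<Rightarrow> nat \<Rightarrow> real" where
  "det3 q m1 m2 m3 n1 n2 n3 =
     K q m1 n1 * (K q m2 n2 * K q m3 n3 - K q m2 n3 * K q m3 n2)
   - K q m1 n2 * (K q m2 n1 * K q m3 n3 - K q m2 n3 * K q m3 n1)
   + K q m1 n3 * (K q m2 n1 * K q m3 n2 - K q m2 n2 * K q m3 n1)"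

end

theory Submission
  imports Defs
begin

lemma qpoch_Suc: "qpoch x q (Suc n) = qpoch x q n * (1 - x * q ^ n)"
  by (simp add: qpoch_def)

lemma fac_pos:
  fixes q x :: real
  assumes "0 < q" "q < 1" "0 < x" "x < 1"
  shows fac_pos': "0 < 1 - x * q ^ j" and fac_lt: "x * q ^ j < 1"
proof -
  have "q ^ j \<le> 1" using assms by (intro power_le_one) auto
  hence "x * q ^ j \<le> x" using assms by (simp add: mult_left_le)
  thus "0 < 1 - x * q ^ j" "x * q ^ j < 1" using assms by linarith+
qed

lemma qpoch_pos:
  assumes "0 < q" "q < 1" "0 < x" "x < 1"
  shows "0 < qpoch x q n"
  unfolding qpoch_def using fac_pos[OF assms] by (simp add: prod_pos)

lemma qpoch_ineq:
  assumes "0 < q" "q < 1" "0 < x2" "x2 < x1" "x1 < 1" "n1 < n2"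
  shows "qpoch x1 q n2 * qpoch x2 q n1 < qpoch x1 q n1 * qpoch x2 q n2"
  using assms(6)
proof (induction n2)
  case 0 then show ?case by simp
next
  case (Suc n)
  have c: "1 - x1 * q ^ n < 1 - x2 * q ^ n" using assms by simp
  have c1: "0 < 1 - x1 * q ^ n" using fac_lt assms by simp
  have p1: "0 < qpoch x1 q n" "0 < qpoch x2 q n1" "0 < qpoch x1 q n1" "0 < qpoch x2 q n"
    using qpoch_pos assms by auto
  show ?case
  proof (cases "n1 = n")
    case True
    then show ?thesis using c p1 by (simp add: qpoch_Suc)
  next
    case False
    hence ih: "qpoch x1 q n * qpoch x2 q n1 < qpoch x1 q n1 * qpoch x2 q n"
      using Suc by simp
    have "qpoch x1 q (Suc n) * qpoch x2 q n1
          = (qpoch x1 q n * qpoch x2 q n1) * (1 - x1 * q ^ n)" by (simp add: qpoch_Suc)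
    also have "\<dots> \<le> (qpoch x1 q n1 * qpoch x2 q n) * (1 - x1 * q ^ n)"
      using ih c1 by simp
    also have "\<dots> < (qpoch x1 q n1 * qpoch x2 q n) * (1 - x2 * q ^ n)"
      using c p1 by simp
    also have "\<dots> = qpoch x1 q n1 * qpoch x2 q (Suc n)" by (simp add: qpoch_Suc)
    finally show ?thesis .
  qed
qed

lemma x_facts:
  fixes q \<mu> :: real
  assumes "0 < q" "q < 1" "0 < \<mu>"
  shows "0 < q powr \<mu>" "q powr \<mu> < 1"
  using assms powr01_less_one[of q \<mu>] by auto

lemma det2_neg:
  assumes "0 < q" "q < 1" "0 < \<mu>1" "\<mu>1 < \<mu>2" "n1 < n2"
  shows "det2 q \<mu>1 \<mu>2 n1 n2 < 0"
proof -
  define x1 where "x1 = q powr \<mu>1"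
  define x2 where "x2 = q powr \<mu>2"
  have x: "0 < x2" "x2 < x1" "x1 < 1"
    using assms x_facts[of q \<mu>1] x_facts[of q \<mu>2] powr_less_mono'[of q \<mu>1 \<mu>2]
    by (auto simp: x1_def x2_def)
  have i: "qpoch x1 q n2 * qpoch x2 q n1 < qpoch x1 q n1 * qpoch x2 q n2"
    using qpoch_ineq assms x by blast
  have p: "0 < qpoch x1 q n1" "0 < qpoch x2 q n1" "0 < qpoch x1 q n2" "0 < qpoch x2 q n2"
    using qpoch_pos assms x by auto
  show ?thesis unfolding det2_def K_def x1_def[symmetric] x2_def[symmetric]
    using i p by (simp add: field_simps)
qed

lemma det3_alg:
  fixes Q1 Q2 Q3 u1 u2 u3 q :: real
  assumes "Q1 \<noteq> 0" "Q2 \<noteq> 0" "Q3 \<noteq> 0" "1 - u1 \<noteq> 0" "1 - u2 \<noteq> 0" "1 - u3 \<noteq> 0"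
   "1 - q*u1 \<noteq> 0" "1 - q*u2 \<noteq> 0" "1 - q*u3 \<noteq> 0"
  shows "1/Q1 * (1/(Q2*(1-u2)) * (1/(Q3*(1-u3)*(1-q*u3))) - 1/(Q2*(1-u2)*(1-q*u2)) * (1/(Q3*(1-u3))))
   - 1/(Q1*(1-u1)) * (1/Q2 * (1/(Q3*(1-u3)*(1-q*u3))) - 1/(Q2*(1-u2)*(1-q*u2)) * (1/Q3))
   + 1/(Q1*(1-u1)*(1-q*u1)) * (1/Q2 * (1/(Q3*(1-u3))) - 1/(Q2*(1-u2)) * (1/Q3))
   = - (q^2 * (u1 - u2) * (u1 - u3) * (u2 - u3)) / (Q1 * Q2 * Q3 * (1 - u1) * (1 - u2) * (1 - u3)
      * (1 - q * u1) * (1 - q * u2) * (1 - q * u3))"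
  using assms apply (simp add: divide_simps) 
  by algebra

lemma det3_cons:
  assumes "0 < q" "q < 1" "0 < \<mu>1" "\<mu>1 < \<mu>2" "\<mu>2 < \<mu>3"
  shows "det3 q \<mu>1 \<mu>2 \<mu>3 n (Suc n) (Suc (Suc n)) < 0"
proof -
  define x1 where "x1 = q powr \<mu>1"
  define x2 where "x2 = q powr \<mu>2"
  define x3 where "x3 = q powr \<mu>3"
  have x: "0 < x3" "x3 < x2" "x2 < x1" "x1 < 1"
    using assms x_facts[of q \<mu>1] x_facts[of q \<mu>3] powr_less_mono'[of q \<mu>1 \<mu>2]
      powr_less_mono'[of q \<mu>2 \<mu>3]
    by (auto simp: x1_def x2_def x3_def)
  define Q1 where "Q1 = qpoch x1 q n"
  define Q2 where "Q2 = qpoch x2 q n"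
  define Q3 where "Q3 = qpoch x3 q n"
  define u1 where "u1 = x1 * q ^ n"
  define u2 where "u2 = x2 * q ^ n"
  define u3 where "u3 = x3 * q ^ n"
  have Q: "0 < Q1" "0 < Q2" "0 < Q3" using qpoch_pos assms x by (auto simp: Q1_def Q2_def Q3_def)
  have a1: "0 < 1 - u1" "0 < 1 - u2" "0 < 1 - u3"
    using fac_lt assms x by (auto simp: u1_def u2_def u3_def)
  have b1: "0 < 1 - x1 * q ^ Suc n" "0 < 1 - x2 * q ^ Suc n" "0 < 1 - x3 * q ^ Suc n"
    using fac_pos'[of q x1 "Suc n"] fac_pos'[of q x2 "Suc n"] fac_pos'[of q x3 "Suc n"] assms x
    by auto
  have b: "0 < 1 - q * u1" "0 < 1 - q * u2" "0 < 1 - q * u3"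
    using b1 by (auto simp: u1_def u2_def u3_def algebra_simps)
  have qn: "0 < q ^ n" using assms by simp
  have u: "u3 < u2" "u2 < u1" using x qn by (auto simp: u1_def u2_def u3_def)
  have K1: "K q \<mu>1 n = 1 / Q1" "K q \<mu>1 (Suc n) = 1 / (Q1 * (1 - u1))"
     "K q \<mu>1 (Suc (Suc n)) = 1 / (Q1 * (1 - u1) * (1 - q * u1))"
    by (simp_all add: K_def x1_def[symmetric] Q1_def u1_def qpoch_Suc algebra_simps)
  have K2: "K q \<mu>2 n = 1 / Q2" "K q \<mu>2 (Suc n) = 1 / (Q2 * (1 - u2))"
     "K q \<mu>2 (Suc (Suc n)) = 1 / (Q2 * (1 - u2) * (1 - q * u2))"
    by (simp_all add: K_def x2_def[symmetric] Q2_def u2_def qpoch_Suc algebra_simps)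
  have K3: "K q \<mu>3 n = 1 / Q3" "K q \<mu>3 (Suc n) = 1 / (Q3 * (1 - u3))"
     "K q \<mu>3 (Suc (Suc n)) = 1 / (Q3 * (1 - u3) * (1 - q * u3))"
    by (simp_all add: K_def x3_def[symmetric] Q3_def u3_def qpoch_Suc algebra_simps)
  define N where "N = Q1 * Q2 * Q3 * (1 - u1) * (1 - u2) * (1 - u3)
      * (1 - q * u1) * (1 - q * u2) * (1 - q * u3)"
  have N: "0 < N" unfolding N_def using Q a1 b by simp
  have eq: "det3 q \<mu>1 \<mu>2 \<mu>3 n (Suc n) (Suc (Suc n))
     = - (q^2 * (u1 - u2) * (u1 - u3) * (u2 - u3)) / N"
    unfolding det3_def K1 K2 K3 N_def by (rule det3_alg) (use Q a1 b in auto)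
  have "0 < q^2 * (u1 - u2) * (u1 - u3) * (u2 - u3)" using u assms by simp
  thus ?thesis unfolding eq using N by simp
qed


lemma det3_ident1:
  "det3 q m1 m2 m3 a c d * det2 q m1 m2 b c
   = det3 q m1 m2 m3 b c d * det2 q m1 m2 a c + det3 q m1 m2 m3 a b c * det2 q m1 m2 c d"
  unfolding det3_def det2_def by algebra

lemma det3_ident2:
  "det3 q m1 m2 m3 a b d * det2 q m1 m2 b c
   = det3 q m1 m2 m3 b c d * det2 q m1 m2 a b + det3 q m1 m2 m3 a b c * det2 q m1 m2 b d"
  unfolding det3_def det2_def by algebra

lemma det3_neg:
  assumes "0 < q" "q < 1" "0 < \<mu>1" "\<mu>1 < \<mu>2" "\<mu>2 < \<mu>3"
  shows "\<forall>a b c. a < b \<and> b < c \<and> c - a = k \<longrightarrow> det3 q \<mu>1 \<mu>2 \<mu>3 a b c < 0"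
proof (induction k rule: less_induct)
  case (less k)
  show ?case
  proof (intro allI impI)
    fix a b c :: nat
    assume h: "a < b \<and> b < c \<and> c - a = k"
    have M: "\<And>i j. i < j \<Longrightarrow> det2 q \<mu>1 \<mu>2 i j < 0"
      using det2_neg assms by blast
    show "det3 q \<mu>1 \<mu>2 \<mu>3 a b c < 0"
    proof (cases "b = Suc a \<and> c = Suc b")
      case True
      then show ?thesis using det3_cons[OF assms] by simp
    next
      case False
      hence "Suc a < b \<or> Suc b < c" using h by auto
      then show ?thesis
      proof
        assume s: "Suc a < b"
        have d1: "det3 q \<mu>1 \<mu>2 \<mu>3 (Suc a) b c < 0"
          using less[of "c - Suc a"] h s by auto
        have d2: "det3 q \<mu>1 \<mu>2 \<mu>3 a (Suc a) b < 0"
          using less[of "b - a"] h s by auto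
        have e: "det3 q \<mu>1 \<mu>2 \<mu>3 a b c * det2 q \<mu>1 \<mu>2 (Suc a) b
          = det3 q \<mu>1 \<mu>2 \<mu>3 (Suc a) b c * det2 q \<mu>1 \<mu>2 a b
          + det3 q \<mu>1 \<mu>2 \<mu>3 a (Suc a) b * det2 q \<mu>1 \<mu>2 b c"
          by (rule det3_ident1)
        have m1: "det2 q \<mu>1 \<mu>2 (Suc a) b < 0" "det2 q \<mu>1 \<mu>2 a b < 0" "det2 q \<mu>1 \<mu>2 b c < 0"
          using M h s by auto
        have "0 < det3 q \<mu>1 \<mu>2 \<mu>3 a b c * det2 q \<mu>1 \<mu>2 (Suc a) b"
          unfolding e using d1 d2 m1 by (simp add: add_pos_pos mult_neg_neg)
        thus ?thesis using m1(1) by (simp add: zero_less_mult_iff)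
      next
        assume s: "Suc b < c"
        have d1: "det3 q \<mu>1 \<mu>2 \<mu>3 b (Suc b) c < 0"
          using less[of "c - b"] h s by auto
        have d2: "det3 q \<mu>1 \<mu>2 \<mu>3 a b (Suc b) < 0"
          using less[of "Suc b - a"] h s by auto
        have e: "det3 q \<mu>1 \<mu>2 \<mu>3 a b c * det2 q \<mu>1 \<mu>2 b (Suc b)
          = det3 q \<mu>1 \<mu>2 \<mu>3 b (Suc b) c * det2 q \<mu>1 \<mu>2 a b
          + det3 q \<mu>1 \<mu>2 \<mu>3 a b (Suc b) * det2 q \<mu>1 \<mu>2 b c"
          by (rule det3_ident2)
        have m1: "det2 q \<mu>1 \<mu>2 b (Suc b) < 0" "det2 q \<mu>1 \<mu>2 a b < 0" "det2 q \<mu>1 \<mu>2 b c < 0"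
          using M h s by auto
        have "0 < det3 q \<mu>1 \<mu>2 \<mu>3 a b c * det2 q \<mu>1 \<mu>2 b (Suc b)"
          unfolding e using d1 d2 m1 by (simp add: add_pos_pos mult_neg_neg)
        thus ?thesis using m1(1) by (simp add: zero_less_mult_iff)
      qed
    qed
  qed
qed

theorem lemma4:
  fixes q :: real
  assumes "0 < q" and "q < 1"
  shows "(\<forall>\<mu>1 n1. 0 < \<mu>1 \<longrightarrow> K q \<mu>1 n1 > 0)
       \<and> (\<forall>\<mu>1 \<mu>2 n1 n2. 0 < \<mu>1 \<and> \<mu>1 < \<mu>2 \<and> n1 < n2 \<longrightarrow> det2 q \<mu>1 \<mu>2 n1 n2 < 0)
       \<and> (\<forall>\<mu>1 \<mu>2 \<mu>3 n1 n2 n3. 0 < \<mu>1 \<and> \<mu>1 < \<mu>2 \<and> \<mu>2 < \<mu>3 \<and> n1 < n2 \<and> n2 < n3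
            \<longrightarrow> det3 q \<mu>1 \<mu>2 \<mu>3 n1 n2 n3 < 0)"
proof (intro conjI allI impI)
  fix \<mu>1 :: real and n1 :: nat
  assume "0 < \<mu>1"
  then show "K q \<mu>1 n1 > 0"
    unfolding K_def using qpoch_pos[OF assms x_facts[OF assms]] by simp
next
  fix \<mu>1 \<mu>2 :: real and n1 n2 :: nat
  assume "0 < \<mu>1 \<and> \<mu>1 < \<mu>2 \<and> n1 < n2"
  then show "det2 q \<mu>1 \<mu>2 n1 n2 < 0" using det2_neg assms by blast
next
  fix \<mu>1 \<mu>2 \<mu>3 :: real and n1 n2 n3 :: nat
  assume h: "0 < \<mu>1 \<and> \<mu>1 < \<mu>2 \<and> \<mu>2 < \<mu>3 \<and> n1 < n2 \<and> n2 < n3"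
  then show "det3 q \<mu>1 \<mu>2 \<mu>3 n1 n2 n3 < 0"
    using det3_neg[OF assms, of \<mu>1 \<mu>2 \<mu>3 "n3 - n1"] by blast
qed

end
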